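(* In every run of the algorithm described in the context, at every time and for every $i\in\{1,\dots,n\}$, the sequence $history_i[0..w\_sync_i[i]]$ is a prefix of the sequence $history_w[0..w\_sync_w[w]]$.
   Context: Model. There are $n$ asynchronous processes $p_1,\dots,p_n$, of which up to $t<n/2$ may crash; a process runs its algorithm correctly until it crashes. Each ordered pair of processes is linked by a reliable (no loss, corruption, duplication or creation), asynchronous, not necessarily FIFO channel. $p_w$ is the single writer, invoking writes sequentially; $v_0$ is the initial value. Messages: $\textsc{write}(b,v)$ with $b\in\{0,1\}$, which stands for the two types $\textsc{write0}(v)$ and $\textsc{write1}(v)$; $\textsc{read}()$; $\textsc{proceed}()$. Variables of $p_i$. These are: $history_i$ with $history_i[0]=v_0$; $w\_sync_i[1..n]$, initially all $0$; $r\_sync_i[1..n]$, initially all $0$. $\mathsf{write}(v)$ by $p_w$: $wsn\gets w\_sync_w[w]+1$; $w\_sync_w[w]\gets wsn$; $history_w[wsn]\gets v$. Send $\textsc{write}(wsn\bmod 2,v)$ to each $p_j$ with $w\_sync_w[j]=wsn-1$. Wait until at least $n-t$ indices $j$ have $w\_sync_w[j]=wsn$. Return. $\mathsf{read}()$ by $p_i$: $r\_sync_i[i]\gets r\_sync_i[i]+1$ and call the new value $rsn$. Send $\textsc{read}()$ to all $p_j$ with $j\ne i$. Wait until at least $n-t$ indices $j$ have $r\_sync_i[j]=rsn$. Let $sn\gets w\_sync_i[i]$. Wait until at least $n-t$ indices $j$ have $w\_sync_i[j]\ge sn$. Return $history_i[sn]$. On receipt of $\textsc{write}(b,v)$ from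 $p_j$ at $p_i$: Wait until $b=(w\_sync_i[j]+1)\bmod 2$. Let $wsn\gets w\_sync_i[j]+1$. If $wsn=w\_sync_i[i]+1$, then set $w\_sync_i[i]\gets wsn$ and $history_i[wsn]\gets v$, and send $\textsc{write}(wsn\bmod 2,v)$ to each $p_\ell$ with $w\_sync_i[\ell]=wsn-1$. Else, if $wsn<w\_sync_i[i]$, send $\textsc{write}((wsn+1)\bmod 2,history_i[wsn+1])$ to $p_j$. Finally set $w\_sync_i[j]\gets wsn$. On receipt of $\textsc{read}()$ from $p_j$ at $p_i$: Let $sn\gets w\_sync_i[i]$; wait until $w\_sync_i[j]\ge sn$; send $\textsc{proceed}()$ to $p_j$. On receipt of $\textsc{proceed}()$ from $p_j$ at $p_i$: $r\_sync_i[j]\gets r\_sync_i[j]+1$. Message handlers run concurrently; a waiting handler does not block the reception of other messages. *)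

theory Defs
  imports Main "HOL-Library.Multiset" "HOL-Library.Sublist"
begin

text \<open>Processes are numbered 1..n; p_w is the writer. Messages: WRITE(b,v) with b in {0,1},
  READ(), PROCEED().\<close>

datatype 'v msg = WriteM nat 'v | ReadM | ProceedM

text \<open>Control state of the (sequential) operation currently executed by a process:
  Idle; W wsn = write with sequence number wsn waiting for n-t acknowledgements;
  R1 rsn = read waiting for n-t PROCEED rounds; R2 sn = read waiting for n-t w_sync entries >= sn.\<close>
datatype opst = Idle | W nat | R1 nat | R2 nat

record 'v conf =
  hist :: "nat \<Rightarrow> nat \<Rightarrow> 'v"          \<comment> \<open>hist s i k = history_i[k]\<close>
  wsync :: "nat \<Rightarrow> nat \<Rightarrow> nat"        \<comment> \<open>wsync s i j = w_sync_i[j]\<close>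
  rsync :: "nat \<Rightarrow> nat \<Rightarrow> nat"        \<comment> \<open>rsync s i j = r_sync_i[j]\<close>
  opc :: "nat \<Rightarrow> opst"
  pend :: "(nat \<times> nat \<times> nat) multiset"  \<comment> \<open>(i,j,sn): READ handler at p_i for p_j, waiting for w_sync_i[j] >= sn\<close>
  net :: "(nat \<times> nat \<times> 'v msg) multiset"  \<comment> \<open>(src,dst,m): sent, not yet handled\<close>
  crashed :: "nat set"

definition procs :: "nat \<Rightarrow> nat set" where "procs n = {1..n}"

definition sendto :: "nat \<Rightarrow> nat set \<Rightarrow> 'v msg \<Rightarrow> (nat \<times> nat \<times> 'v msg) multiset" where
  "sendto p S m = mset_set ((\<lambda>j. (p, j, m)) ` S)"

definition init_conf :: "nat \<Rightarrow> 'v \<Rightarrow> 'v conf \<Rightarrow> bool" where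
  "init_conf n v0 s \<longleftrightarrow>
     (\<forall>i. hist s i 0 = v0) \<and> wsync s = (\<lambda>_ _. 0) \<and> rsync s = (\<lambda>_ _. 0) \<and>
     opc s = (\<lambda>_. Idle) \<and> pend s = {#} \<and> net s = {#} \<and> crashed s = {}"

inductive step :: "nat \<Rightarrow> nat \<Rightarrow> nat \<Rightarrow> 'v conf \<Rightarrow> 'v conf \<Rightarrow> bool"
  for n t w :: nat where
  write_inv:
  "\<lbrakk> w \<notin> crashed s; opc s w = Idle; wsn = wsync s w w + 1 \<rbrakk> \<Longrightarrow>
   step n t w s
    (s\<lparr> wsync := (wsync s)(w := (wsync s w)(w := wsn)),
        hist := (hist s)(w := (hist s w)(wsn := v)),
        opc := (opc s)(w := W wsn),
        net := net s + sendto w {j \<in> procs n. ((wsync s w)(w := wsn)) j = wsn - 1}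
                                 (WriteM (wsn mod 2) v) \<rparr>)"
| write_ret:
  "\<lbrakk> w \<notin> crashed s; opc s w = W wsn; card {j \<in> procs n. wsync s w j = wsn} \<ge> n - t \<rbrakk> \<Longrightarrow>
   step n t w s (s\<lparr> opc := (opc s)(w := Idle) \<rparr>)"
| read_inv:
  "\<lbrakk> i \<in> procs n; i \<notin> crashed s; opc s i = Idle; rsn = rsync s i i + 1 \<rbrakk> \<Longrightarrow>
   step n t w s
    (s\<lparr> rsync := (rsync s)(i := (rsync s i)(i := rsn)),
        opc := (opc s)(i := R1 rsn),
        net := net s + sendto i {j \<in> procs n. j \<noteq> i} ReadM \<rparr>)"
| read_mid:
  "\<lbrakk> i \<in> procs n; i \<notin> crashed s; opc s i = R1 rsn;
     card {j \<in> procs n. rsync s i j = rsn} \<ge> n - t \<rbrakk> \<Longrightarrow>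
   step n t w s (s\<lparr> opc := (opc s)(i := R2 (wsync s i i)) \<rparr>)"
| read_ret:
  "\<lbrakk> i \<in> procs n; i \<notin> crashed s; opc s i = R2 sn;
     card {j \<in> procs n. wsync s i j \<ge> sn} \<ge> n - t \<rbrakk> \<Longrightarrow>
   step n t w s (s\<lparr> opc := (opc s)(i := Idle) \<rparr>)"
  \<comment> \<open>handling of WRITE(b,v) from p_j at p_i, once its wait condition holds\<close>
| recv_write:
  "\<lbrakk> i \<in> procs n; i \<notin> crashed s; (j, i, WriteM b v) \<in># net s;
     b = (wsync s i j + 1) mod 2; wsn = wsync s i j + 1;
     s' = (if wsn = wsync s i i + 1 then
             s\<lparr> wsync := (wsync s)(i := (wsync s i)(i := wsn)),
                hist := (hist s)(i := (hist s i)(wsn := v)),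
                net := (net s - {#(j, i, WriteM b v)#}) +
                       sendto i {l \<in> procs n. ((wsync s i)(i := wsn)) l = wsn - 1}
                              (WriteM (wsn mod 2) v) \<rparr>
           else if wsn < wsync s i i then
             s\<lparr> net := (net s - {#(j, i, WriteM b v)#}) +
                       {#(i, j, WriteM ((wsn + 1) mod 2) (hist s i (wsn + 1)))#} \<rparr>
           else s\<lparr> net := net s - {#(j, i, WriteM b v)#} \<rparr>) \<rbrakk> \<Longrightarrow>
   step n t w s (s'\<lparr> wsync := (wsync s')(i := (wsync s' i)(j := wsn)) \<rparr>)"
| recv_read:
  "\<lbrakk> i \<in> procs n; i \<notin> crashed s; (j, i, ReadM) \<in># net s \<rbrakk> \<Longrightarrow>
   step n t w s (s\<lparr> net := net s - {#(j, i, ReadM)#},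
                     pend := pend s + {#(i, j, wsync s i i)#} \<rparr>)"
| serve_read:
  "\<lbrakk> i \<in> procs n; i \<notin> crashed s; (i, j, sn) \<in># pend s; wsync s i j \<ge> sn \<rbrakk> \<Longrightarrow>
   step n t w s (s\<lparr> pend := pend s - {#(i, j, sn)#},
                     net := net s + {#(i, j, ProceedM)#} \<rparr>)"
| recv_proceed:
  "\<lbrakk> i \<in> procs n; i \<notin> crashed s; (j, i, ProceedM) \<in># net s \<rbrakk> \<Longrightarrow>
   step n t w s (s\<lparr> net := net s - {#(j, i, ProceedM)#},
                     rsync := (rsync s)(i := (rsync s i)(j := rsync s i j + 1)) \<rparr>)"
| crash:
  "\<lbrakk> i \<in> procs n; i \<notin> crashed s; card (crashed s) < t \<rbrakk> \<Longrightarrow>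
   step n t w s (s\<lparr> crashed := insert i (crashed s) \<rparr>)"

inductive reachable :: "nat \<Rightarrow> nat \<Rightarrow> nat \<Rightarrow> 'v \<Rightarrow> 'v conf \<Rightarrow> bool"
  for n t w :: nat and v0 :: 'v where
  init: "init_conf n v0 s \<Longrightarrow> reachable n t w v0 s"
| stepI: "reachable n t w v0 s \<Longrightarrow> step n t w s s' \<Longrightarrow> reachable n t w v0 s'"

end

theory Submission
  imports Defs
begin

fun isW :: "'v msg \<Rightarrow> bool" where
  "isW (WriteM _ _) = True" | "isW ReadM = False" | "isW ProceedM = False"

definition pr :: "nat \<Rightarrow> nat \<Rightarrow> (nat \<times> nat \<times> 'v msg) \<Rightarrow> bool" where
  "pr x y m \<longleftrightarrow> fst m = x \<and> fst (snd m) = y \<and> isW (snd (snd m))"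

definition msgs :: "(nat \<Rightarrow> 'v) \<Rightarrow> nat \<Rightarrow> nat \<Rightarrow> nat \<Rightarrow> nat \<Rightarrow> (nat \<times> nat \<times> 'v msg) multiset" where
  "msgs H x y lo hi = mset (map (\<lambda>k. (x, y, WriteM (k mod 2) (H k))) [Suc lo..<Suc hi])"

definition SS :: "'v conf \<Rightarrow> nat \<Rightarrow> nat \<Rightarrow> nat" where
  "SS s x y = min (wsync s x x) (Suc (wsync s x y))"

lemma filt_sendto:
  assumes "finite S"
  shows "filter_mset (pr x y) (sendto p S m) =
         (if p = x \<and> y \<in> S \<and> isW m then {#(x,y,m)#} else {#})"
proof -
  have "{z \<in> (\<lambda>j. (p, j, m)) ` S. pr x y z} =
        (if p = x \<and> y \<in> S \<and> isW m then {(x,y,m)} else {})"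
    by (auto simp: pr_def)
  then show ?thesis using assms by (simp add: sendto_def filter_mset_mset_set)
qed

lemma msgs_empty: "msgs H x y lo lo = {#}"
  by (simp add: msgs_def)

lemma msgs_snoc: "lo \<le> hi \<Longrightarrow> msgs H x y lo (Suc hi) = add_mset (x, y, WriteM (Suc hi mod 2) (H (Suc hi))) (msgs H x y lo hi)"
  by (simp add: msgs_def)

lemma msgs_cons: "lo < hi \<Longrightarrow> msgs H x y lo hi = add_mset (x, y, WriteM (Suc lo mod 2) (H (Suc lo))) (msgs H x y (Suc lo) hi)"
proof -
  assume "lo < hi"
  then have "[Suc lo..<Suc hi] = Suc lo # [Suc (Suc lo)..<Suc hi]" by (simp add: upt_conv_Cons)
  then show ?thesis by (simp add: msgs_def del: mset_upt upt_Suc)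
qed

lemma msgs_mem: "m \<in># msgs H x y lo hi \<Longrightarrow> \<exists>k. lo < k \<and> k \<le> hi \<and> m = (x, y, WriteM (k mod 2) (H k))"
proof -
  assume "m \<in># msgs H x y lo hi"
  then have "m \<in> set (map (\<lambda>k. (x, y, WriteM (k mod 2) (H k))) [Suc lo..<Suc hi])"
    unfolding msgs_def by (simp only: in_multiset_in_set)
  then obtain k where "k \<in> set [Suc lo..<Suc hi]" "m = (x, y, WriteM (k mod 2) (H k))"
    unfolding set_map by blast
  then show ?thesis by (intro exI[of _ k]) auto
qed

lemma msgs_cong: "(\<And>k. k \<le> hi \<Longrightarrow> H k = H' k) \<Longrightarrow> msgs H x y lo hi = msgs H' x y lo hi"
  unfolding msgs_def by (intro arg_cong[where f=mset] map_cong) auto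

lemma filt_other: "\<not> isW (snd (snd m)) \<Longrightarrow> filter_mset (pr x y) {#m#} = {#}"
  by (simp add: pr_def)

lemma fin_procs: "finite (procs n)" by (simp add: procs_def)

definition Inv :: "nat \<Rightarrow> nat \<Rightarrow> 'v conf \<Rightarrow> bool" where
  "Inv n w s \<longleftrightarrow>
    (\<forall>i. wsync s i i \<le> wsync s w w) \<and>
    (\<forall>i k. k \<le> wsync s i i \<longrightarrow> hist s i k = hist s w k) \<and>
    (\<forall>i\<in>procs n. \<forall>j\<in>procs n. wsync s i j \<le> wsync s i i) \<and>
    (\<forall>x\<in>procs n. \<forall>y\<in>procs n. wsync s y x \<le> SS s x y \<and>
        filter_mset (pr x y) (net s) = msgs (hist s w) x y (wsync s y x) (SS s x y)) \<and>
    (\<forall>m\<in>#net s. isW (snd (snd m)) \<longrightarrow> fst m \<in> procs n \<and> fst (snd m) \<in> procs n)"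

lemma inv_init: "init_conf n v0 s \<Longrightarrow> Inv n w s"
  by (auto simp: init_conf_def Inv_def SS_def msgs_empty)

lemma mem_sendto: "finite S \<Longrightarrow> m \<in># sendto p S M \<longleftrightarrow> (\<exists>j\<in>S. m = (p,j,M))"
  by (auto simp: sendto_def)

lemma pr_simps[simp]: "pr x y (a,b,ReadM) = False" "pr x y (a,b,ProceedM) = False"
  "pr x y (a,b,WriteM c d) = (a = x \<and> b = y)"
  by (simp_all add: pr_def)

lemma filt_nonW: "\<not> isW m \<Longrightarrow> filter_mset (pr x y) {#(a,b,m)#} = {#}"
  by (simp add: pr_def)

lemma inv_step:
  assumes wP: "w \<in> procs n" and I: "Inv n w s" and st: "step n t w s s2"
  shows "Inv n w s2"
  using st
proof cases
  case (write_inv wsn v)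
  define W where "W = wsync s w w"
  define H where "H = hist s w"
  define A where "A = {j \<in> procs n. ((wsync s w)(w := Suc W)) j = W}"
  define M where "M = WriteM (Suc W mod 2) v"
  have ws2: "wsync s2 = (wsync s)(w := (wsync s w)(w := Suc W))"
    using write_inv by (simp add: W_def)
  have h2: "hist s2 = (hist s)(w := (hist s w)(Suc W := v))"
    using write_inv by (simp add: W_def)
  have n2: "net s2 = net s + sendto w A M"
    using write_inv by (simp add: W_def A_def M_def)
  have H2: "hist s2 w = H(Suc W := v)" by (simp add: h2 H_def)
  have W2: "wsync s2 w w = Suc W" by (simp add: ws2)
  have I1: "\<forall>i. wsync s i i \<le> W" using I by (simp add: Inv_def W_def)
  have I2: "\<forall>i k. k \<le> wsync s i i \<longrightarrow> hist s i k = H k" using I by (simp add: Inv_def H_def)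
  have I3: "\<forall>i\<in>procs n. \<forall>j\<in>procs n. wsync s i j \<le> wsync s i i" using I by (simp add: Inv_def)
  have I4: "\<forall>x\<in>procs n. \<forall>y\<in>procs n. wsync s y x \<le> SS s x y \<and>
        filter_mset (pr x y) (net s) = msgs H x y (wsync s y x) (SS s x y)"
    using I by (simp add: Inv_def H_def)
  have I5: "\<forall>m\<in>#net s. isW (snd (snd m)) \<longrightarrow> fst m \<in> procs n \<and> fst (snd m) \<in> procs n"
    using I by (simp add: Inv_def)
  have finA: "finite A" using fin_procs by (simp add: A_def)
  have C1: "\<forall>i. wsync s2 i i \<le> wsync s2 w w"
    using I1 by (simp add: ws2) (metis le_SucI)
  have C2: "\<forall>i k. k \<le> wsync s2 i i \<longrightarrow> hist s2 i k = hist s2 w k"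
  proof (intro allI impI)
    fix i k assume k: "k \<le> wsync s2 i i"
    show "hist s2 i k = hist s2 w k"
    proof (cases "i = w")
      case True then show ?thesis by simp
    next
      case False
      then have "k \<le> W" using k I1 by (simp add: ws2) (metis le_trans)
      then show ?thesis using False k I2 by (simp add: h2 H_def ws2)
    qed
  qed
  have C3: "\<forall>i\<in>procs n. \<forall>j\<in>procs n. wsync s2 i j \<le> wsync s2 i i"
    using I3 by (simp add: ws2 W_def) (metis le_SucI)
  have C4: "\<forall>x\<in>procs n. \<forall>y\<in>procs n. wsync s2 y x \<le> SS s2 x y \<and>
        filter_mset (pr x y) (net s2) = msgs (hist s2 w) x y (wsync s2 y x) (SS s2 x y)"
  proof (intro ballI)
    fix x y assume x: "x \<in> procs n" and y: "y \<in> procs n"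
    have F2: "filter_mset (pr x y) (net s2) = filter_mset (pr x y) (net s) +
       (if w = x \<and> y \<in> A then {#(x,y,M)#} else {#})"
      by (simp add: n2 filt_sendto finA M_def)
    have old: "wsync s y x \<le> SS s x y" "filter_mset (pr x y) (net s) = msgs H x y (wsync s y x) (SS s x y)"
      using I4 x y by auto
    have SSx: "SS s x y \<le> wsync s x x" by (simp add: SS_def)
    show "wsync s2 y x \<le> SS s2 x y \<and>
        filter_mset (pr x y) (net s2) = msgs (hist s2 w) x y (wsync s2 y x) (SS s2 x y)"
    proof (cases "x = w")
      case False
      have e1: "wsync s2 y x = wsync s y x" using False by (simp add: ws2)
      have e2: "SS s2 x y = SS s x y" using False by (simp add: ws2 SS_def)
      have "msgs (hist s2 w) x y (wsync s y x) (SS s x y) = msgs H x y (wsync s y x) (SS s x y)"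
        using SSx I1 by (intro msgs_cong) (simp add: H2, metis le_trans not_less_eq_eq)
      then show ?thesis using False old e1 e2 F2 by simp
    next
      case True
      show ?thesis
      proof (cases "y = w")
        case True
        have "SS s w w = W" by (simp add: SS_def W_def)
        then have "filter_mset (pr x y) (net s) = {#}" using old True \<open>x = w\<close> by (simp add: W_def msgs_empty)
        moreover have "w \<notin> A" by (simp add: A_def)
        ultimately show ?thesis using True \<open>x = w\<close> F2 by (simp add: SS_def ws2 msgs_empty)
      next
        case False
        have e1: "wsync s2 y x = wsync s y x" using False by (simp add: ws2)
        have le: "wsync s w y \<le> W" using I3 y wP by (simp add: W_def)
        show ?thesis
        proof (cases "wsync s w y = W")
          case True
          have yA: "y \<in> A" using True False y by (simp add: A_def)
          have S1: "SS s w y = W" using True by (simp add: SS_def W_def)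
          have S2: "SS s2 w y = Suc W" using True False by (simp add: SS_def ws2)
          have lo: "wsync s y w \<le> W" using old S1 \<open>x = w\<close> by simp
          have "msgs (hist s2 w) w y (wsync s y w) (Suc W) =
              add_mset (w, y, M) (msgs (hist s2 w) w y (wsync s y w) W)"
            using lo by (simp add: msgs_snoc H2 M_def)
          also have "msgs (hist s2 w) w y (wsync s y w) W = msgs H w y (wsync s y w) W"
            by (intro msgs_cong) (simp add: H2)
          finally show ?thesis using F2 old yA S1 S2 e1 lo \<open>x = w\<close> by simp
        next
          case ne: False
          have yA: "y \<notin> A" using ne False by (simp add: A_def)
          have S1: "SS s w y = Suc (wsync s w y)" using ne le by (simp add: SS_def W_def)
          have S2: "SS s2 w y = Suc (wsync s w y)" using ne le False by (simp add: SS_def ws2)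
          have "msgs (hist s2 w) w y (wsync s y w) (Suc (wsync s w y)) =
                msgs H w y (wsync s y w) (Suc (wsync s w y))"
            using ne le by (intro msgs_cong) (simp add: H2)
          then show ?thesis using F2 old yA S1 S2 e1 \<open>x = w\<close> by simp
        qed
      qed
    qed
  qed
  have C5: "\<forall>m\<in>#net s2. isW (snd (snd m)) \<longrightarrow> fst m \<in> procs n \<and> fst (snd m) \<in> procs n"
  proof -
    have "A \<subseteq> procs n" by (auto simp: A_def)
    then show ?thesis using I5 wP finA by (auto simp: n2 mem_sendto)
  qed
  show ?thesis using C1 C2 C3 C4 C5 by (simp add: Inv_def)
next
  case (write_ret wsn)
  then show ?thesis using I by (simp add: Inv_def SS_def)
next
  case (read_inv i rsn)
  then show ?thesis using I
    by (auto simp add: Inv_def SS_def filt_sendto fin_procs mem_sendto)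
next
  case (read_mid i rsn)
  then show ?thesis using I by (simp add: Inv_def SS_def)
next
  case (read_ret i sn)
  then show ?thesis using I by (simp add: Inv_def SS_def)
next
  case (recv_write i j b v wsn s')
  define W where "W = wsync s w w"
  define H where "H = hist s w"
  define a where "a = wsync s i j"
  define oo where "oo = wsync s i i"
  define m0 where "m0 = (j, i, WriteM b v)"
  define oo2 where "oo2 = (if a = oo then Suc a else oo)"
  define B where "B = {l \<in> procs n. ((wsync s i)(i := Suc a)) l = a}"
  define Add where "Add = (if a = oo then sendto i B (WriteM (Suc a mod 2) v)
      else if Suc a < oo then {#(i, j, WriteM (Suc (Suc a) mod 2) (hist s i (Suc (Suc a))))#}
      else {#})"
  have iP: "i \<in> procs n" using recv_write by simp
  have I1: "\<forall>i. wsync s i i \<le> W" using I by (simp add: Inv_def W_def)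
  have I2: "\<forall>i k. k \<le> wsync s i i \<longrightarrow> hist s i k = H k" using I by (simp add: Inv_def H_def)
  have I3: "\<forall>i\<in>procs n. \<forall>j\<in>procs n. wsync s i j \<le> wsync s i i" using I by (simp add: Inv_def)
  have I4: "\<forall>x\<in>procs n. \<forall>y\<in>procs n. wsync s y x \<le> SS s x y \<and>
        filter_mset (pr x y) (net s) = msgs H x y (wsync s y x) (SS s x y)"
    using I by (simp add: Inv_def H_def)
  have I5: "\<forall>m\<in>#net s. isW (snd (snd m)) \<longrightarrow> fst m \<in> procs n \<and> fst (snd m) \<in> procs n"
    using I by (simp add: Inv_def)
  have finB: "finite B" using fin_procs by (simp add: B_def)
  have m0in: "m0 \<in># net s" using recv_write by (simp add: m0_def)
  have jP: "j \<in> procs n" using I5 m0in by (auto simp: m0_def)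
  have ao: "a \<le> oo" using I3 iP jP by (simp add: a_def oo_def)
  have "m0 \<in># filter_mset (pr j i) (net s)" using m0in by (simp add: m0_def)
  then have "m0 \<in># msgs H j i a (SS s j i)" using I4 iP jP by (simp add: a_def)
  then obtain k where k: "a < k" "k \<le> SS s j i" "m0 = (j, i, WriteM (k mod 2) (H k))"
    using msgs_mem by blast
  have ji: "j \<noteq> i"
  proof
    assume "j = i"
    then have "SS s j i = a" by (simp add: SS_def a_def)
    then show False using k by simp
  qed
  have "SS s j i \<le> Suc (wsync s j i)" by (simp add: SS_def)
  moreover have "wsync s j i \<le> SS s i j" using I4 iP jP by simp
  moreover have "SS s i j \<le> Suc a" by (simp add: SS_def a_def)
  ultimately have "k \<le> Suc (Suc a)" using k by simp
  moreover have "b = Suc a mod 2" using recv_write by (simp add: a_def)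
  ultimately have kk: "k = Suc a"
  proof -
    assume k2: "k \<le> Suc (Suc a)" and bb: "b = Suc a mod 2"
    have par: "Suc a mod 2 = k mod 2" using k(3) bb by (simp add: m0_def)
    have "k = Suc a \<or> k = Suc (Suc a)" using k2 k(1) by arith
    then show ?thesis using par by presburger
  qed
  have vH: "v = H (Suc a)" and bb: "b = Suc a mod 2" using k kk by (auto simp: m0_def)
  have SaS: "Suc a \<le> SS s j i" using k kk by simp
  have SaW: "Suc a \<le> W" using SaS I1 by (simp add: SS_def) (metis le_trans min.coboundedI1)
  have iw: "a = oo \<Longrightarrow> i \<noteq> w" using SaW by (auto simp: oo_def W_def)
  have ws2: "wsync s2 = (wsync s)(i := (wsync s i)(i := oo2, j := Suc a))"
    using recv_write ji by (auto simp: oo2_def a_def oo_def)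
  have h2: "hist s2 = (if a = oo then (hist s)(i := (hist s i)(Suc a := v)) else hist s)"
    using recv_write by (auto simp: a_def oo_def)
  have n2: "net s2 = (net s - {#m0#}) + Add"
    using recv_write by (auto simp: a_def oo_def Add_def B_def m0_def)
  have W2: "wsync s2 w w = W"
  proof (cases "i = w")
    case True
    then have "a \<noteq> oo" using iw by blast
    then show ?thesis using True ji by (simp add: ws2 oo2_def oo_def W_def)
  qed (simp add: ws2 W_def)
  have H2: "hist s2 w = H" using iw by (auto simp: h2 H_def)
  have oo2W: "oo2 \<le> W" using SaW I1 by (simp add: oo2_def oo_def)
  have "\<forall>x. wsync s2 x x \<le> W"
    using I1 oo2W ji by (simp add: ws2)
  then have C1: "\<forall>x. wsync s2 x x \<le> wsync s2 w w" by (simp add: W2)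
  have C2: "\<forall>x k. k \<le> wsync s2 x x \<longrightarrow> hist s2 x k = hist s2 w k"
  proof (intro allI impI)
    fix x k assume kx: "k \<le> wsync s2 x x"
    show "hist s2 x k = hist s2 w k"
    proof (cases "x = i")
      case False
      have hx: "hist s2 x k = hist s x k" using False by (simp add: h2)
      have kx': "k \<le> wsync s x x" using kx False by (simp add: ws2)
      show ?thesis using hx kx' I2 H2 by simp
    next
      case True
      show ?thesis
      proof (cases "a = oo")
        case True
        then have kS: "k \<le> Suc a" using kx \<open>x = i\<close> ji by (simp add: ws2 oo2_def)
        have hx: "hist s2 i k = (if k = Suc a then v else hist s i k)" using True by (simp add: h2)
        have "hist s2 i k = H k"
        proof (cases "k = Suc a")
          case True then show ?thesis using hx vH by simp
        next
          case False
          then have "k \<le> wsync s i i" using kS \<open>a = oo\<close> by (simp add: oo_def)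
          then show ?thesis using hx False I2 by simp
        qed
        then show ?thesis using H2 \<open>x = i\<close> by simp
      next
        case False
        have hx: "hist s2 i k = hist s i k" using False by (simp add: h2)
        have "k \<le> wsync s i i" using kx \<open>x = i\<close> ji False by (simp add: ws2 oo2_def oo_def)
        then show ?thesis using hx I2 H2 \<open>x = i\<close> by simp
      qed
    qed
  qed
  have C3: "\<forall>x\<in>procs n. \<forall>y\<in>procs n. wsync s2 x y \<le> wsync s2 x x"
    using I3 ao ji by (auto simp: ws2 oo2_def oo_def le_SucI)
  have addP: "\<forall>m\<in>#Add. fst m \<in> procs n \<and> fst (snd m) \<in> procs n"
  proof -
    have "B \<subseteq> procs n" by (auto simp: B_def)
    then show ?thesis using iP jP finB by (auto simp: Add_def mem_sendto)
  qed
  have C5: "\<forall>m\<in>#net s2. isW (snd (snd m)) \<longrightarrow> fst m \<in> procs n \<and> fst (snd m) \<in> procs n"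
    using I5 addP by (auto simp: n2 dest: in_diffD)
  have C4: "\<forall>x\<in>procs n. \<forall>y\<in>procs n. wsync s2 y x \<le> SS s2 x y \<and>
        filter_mset (pr x y) (net s2) = msgs (hist s2 w) x y (wsync s2 y x) (SS s2 x y)"
  proof (intro ballI)
    fix x y assume x: "x \<in> procs n" and y: "y \<in> procs n"
    have F2: "filter_mset (pr x y) (net s2) = filter_mset (pr x y) (net s)
       - (if j = x \<and> i = y then {#m0#} else {#}) + filter_mset (pr x y) Add"
      by (simp add: n2 filter_diff_mset m0_def)
    have FA: "filter_mset (pr x y) Add = (if a = oo then (if i = x \<and> y \<in> B then {#(x,y,WriteM (Suc a mod 2) v)#} else {#})
       else if Suc a < oo then (if i = x \<and> j = y then {#(i,j,WriteM (Suc (Suc a) mod 2) (hist s i (Suc (Suc a))))#} else {#})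
       else {#})"
      by (simp add: Add_def filt_sendto finB)
    have old: "wsync s y x \<le> SS s x y" "filter_mset (pr x y) (net s) = msgs H x y (wsync s y x) (SS s x y)"
      using I4 x y by auto
    show "wsync s2 y x \<le> SS s2 x y \<and>
        filter_mset (pr x y) (net s2) = msgs (hist s2 w) x y (wsync s2 y x) (SS s2 x y)"
    proof (cases "x = i")
      case xi: False
      show ?thesis
      proof (cases "y = i")
        case yi: False
        have e1: "wsync s2 y x = wsync s y x" using yi by (simp add: ws2)
        have e2: "SS s2 x y = SS s x y" using xi by (simp add: ws2 SS_def)
        have "filter_mset (pr x y) (net s2) = filter_mset (pr x y) (net s)"
          using F2 FA xi yi by simp
        then show ?thesis using e1 e2 old H2 by simp
      next
        case yi: True
        have e2: "SS s2 x i = SS s x i" using xi by (simp add: ws2 SS_def)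
        have FA0: "filter_mset (pr x y) Add = {#}" using FA xi by simp
        show ?thesis
        proof (cases "x = j")
          case True
          have e1: "wsync s2 i j = Suc a" using ji by (simp add: ws2)
          have "msgs H j i a (SS s j i) = add_mset m0 (msgs H j i (Suc a) (SS s j i))"
            using SaS vH bb by (simp add: msgs_cons m0_def)
          then have "filter_mset (pr x y) (net s2) = msgs H j i (Suc a) (SS s j i)"
            using F2 FA0 old True yi by (simp add: a_def)
          then show ?thesis using e1 e2 SaS True yi H2 by simp
        next
          case False
          have e1: "wsync s2 i x = wsync s i x" using False xi by (simp add: ws2)
          have "filter_mset (pr x y) (net s2) = filter_mset (pr x y) (net s)"
            using F2 FA0 False by simp
          then show ?thesis using e1 e2 old H2 yi by simp
        qed
      qed
    next
      case xi: True
      show ?thesis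
      proof (cases "y = i")
        case yi: True
        have e1: "wsync s2 i i = oo2" using ji by (simp add: ws2)
        have e2: "SS s2 i i = oo2" using ji by (simp add: ws2 SS_def)
        have "SS s i i = oo" by (simp add: SS_def oo_def)
        then have "filter_mset (pr i i) (net s) = {#}" using old xi yi by (simp add: oo_def msgs_empty)
        moreover have "i \<notin> B" by (simp add: B_def)
        ultimately have "filter_mset (pr x y) (net s2) = {#}" using F2 FA xi yi ji by simp
        then show ?thesis using e1 e2 xi yi by (simp add: msgs_empty)
      next
        case yi: False
        have e1: "wsync s2 y i = wsync s y i" using yi by (simp add: ws2)
        have rle: "wsync s i y \<le> oo" using I3 iP y by (simp add: oo_def)
        have F2': "filter_mset (pr x y) (net s2) = msgs H i y (wsync s y i) (SS s i y) + filter_mset (pr x y) Add"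
          using F2 old xi yi by simp
        have lo: "wsync s y i \<le> SS s i y" using old xi by simp
        show ?thesis
        proof (cases "a = oo")
          case c1: True
          show ?thesis
          proof (cases "wsync s i y = a")
            case True
            have yB: "y \<in> B" using True y yi by (simp add: B_def)
            have S1: "SS s i y = a" using True c1 by (simp add: SS_def oo_def)
            have S2: "SS s2 i y = Suc a" using True c1 ji by (simp add: SS_def ws2 oo2_def)
            have "msgs H i y (wsync s y i) (Suc a) = add_mset (i, y, WriteM (Suc a mod 2) v) (msgs H i y (wsync s y i) a)"
              using lo S1 vH by (simp add: msgs_snoc)
            then show ?thesis using F2' FA c1 yB xi S1 S2 e1 lo H2 by simp
          next
            case False
            then have yj: "y \<noteq> j" by (auto simp: a_def)
            have yB: "y \<notin> B" using False yi by (simp add: B_def)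
            have S1: "SS s i y = Suc (wsync s i y)" using False c1 rle by (simp add: SS_def oo_def)
            have S2: "SS s2 i y = Suc (wsync s i y)" using False c1 rle yj yi ji by (simp add: SS_def ws2 oo2_def oo_def)
            show ?thesis using F2' FA c1 yB xi S1 S2 e1 lo H2 by simp
          qed
        next
          case nc1: False
          show ?thesis
          proof (cases "y = j")
            case yj: True
            show ?thesis
            proof (cases "Suc a < oo")
              case c2: True
              have S1: "SS s i j = Suc a" using c2 by (simp add: SS_def oo_def a_def)
              have S2: "SS s2 i j = Suc (Suc a)" using c2 nc1 ji by (simp add: SS_def ws2 oo2_def oo_def)
              have hv: "hist s i (Suc (Suc a)) = H (Suc (Suc a))" using I2 c2 by (simp add: oo_def)
              have "msgs H i j (wsync s j i) (Suc (Suc a)) = add_mset (i, j, WriteM (Suc (Suc a) mod 2) (H (Suc (Suc a)))) (msgs H i j (wsync s j i) (Suc a))"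
                using lo S1 yj by (simp add: msgs_snoc)
              then show ?thesis using F2' FA c2 nc1 xi yj S1 S2 e1 lo H2 hv by simp
            next
              case c3: False
              then have eq: "Suc a = oo" using nc1 ao by simp
              have S1: "SS s i j = oo" using eq by (simp add: SS_def oo_def a_def)
              have S2: "SS s2 i j = oo" using eq nc1 ji by (simp add: SS_def ws2 oo2_def oo_def)
              show ?thesis using F2' FA c3 nc1 xi yj S1 S2 e1 lo H2 by simp
            qed
          next
            case yj: False
            have S2: "SS s2 i y = SS s i y" using nc1 yj yi ji by (simp add: SS_def ws2 oo2_def oo_def)
            show ?thesis using F2' FA nc1 xi yj S2 e1 lo H2 by simp
          qed
        qed
      qed
    qed
  qed
  show ?thesis using C1 C2 C3 C4 C5 by (simp add: Inv_def)
next
  case (recv_read i j)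
  then show ?thesis using I
    by (auto simp add: Inv_def SS_def filter_diff_mset filt_nonW dest: in_diffD)
next
  case (serve_read i j sn)
  then show ?thesis using I
    by (auto simp add: Inv_def SS_def filt_nonW)
next
  case (recv_proceed i j)
  then show ?thesis using I
    by (auto simp add: Inv_def SS_def filter_diff_mset filt_nonW dest: in_diffD)
next
  case (crash i)
  then show ?thesis using I by (simp add: Inv_def SS_def)
qed

lemma inv_reach:
  assumes "w \<in> procs n" "reachable n t w v0 s"
  shows "Inv n w s"
  using assms(2)
proof induction
  case (init s) then show ?case by (rule inv_init)
next
  case (stepI s s') then show ?case using inv_step[OF assms(1)] by blast
qed

theorem lemma4:
  fixes n t w :: nat and v0 :: 'v and s :: "'v conf"
  assumes "2 * t < n" and "w \<in> procs n"
    and "reachable n t w v0 s" and "i \<in> procs n"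
  shows "prefix (map (hist s i) [0..<Suc (wsync s i i)])
                (map (hist s w) [0..<Suc (wsync s w w)])"
proof -
  have I: "Inv n w s" by (rule inv_reach[OF assms(2,3)])
  have le: "wsync s i i \<le> wsync s w w" using I by (simp add: Inv_def)
  have eq: "map (hist s i) [0..<Suc (wsync s i i)] = map (hist s w) [0..<Suc (wsync s i i)]"
    using I by (auto simp: Inv_def simp del: upt_Suc)
  have "prefix [0..<Suc (wsync s i i)] [0..<Suc (wsync s w w)]"
  proof -
    have "[0..<Suc (wsync s w w)] = [0..<Suc (wsync s i i)] @ [Suc (wsync s i i)..<Suc (wsync s w w)]"
      using le upt_add_eq_append[of 0 "Suc (wsync s i i)" "wsync s w w - wsync s i i"] by simp
    then show ?thesis by (metis prefixI)
  qed
  then show ?thesis unfolding eq by (rule map_mono_prefix)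
qed

end
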